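(* Let $\mathbb{E}$ be a finitely complete category, $\Sigma$ a fibrational class of split epimorphisms, and suppose $\mathbb{E}$ is a $\Sigma$-Mal'tsev category. Let $R$ be an equivalence relation and $S$ a $\Sigma$-equivalence relation on an object $X$. If $R\cap S=\Delta_X$ (the discrete relation), then $[R,S]=0$.
   Context: A split epimorphism is a pair $(f,s)$ with $fs=1$. A class $\Sigma$ of split epimorphisms is fibrational if it contains all split epimorphisms $(f,s)$ with $f$ invertible and is stable under pullback along any morphism. A pair of morphisms with common codomain $Z$ is jointly extremally epic if it factors jointly through no non-invertible monomorphism into $Z$. $\mathbb{E}$ is $\Sigma$-Mal'tsev if for every split epimorphism $(f,s)\colon X\rightleftarrows Y$ in $\Sigma$ and every split epimorphism $(g,t)$ with $g\colon Y'\to Y$, letting $X'=Y'\times_YX$, $s'=(1_{Y'},sg)$, $\bar t=(tf,1_X)$, the pair $(s',\bar t)$ is jointly extremally epic. A $\Sigma$-relation is a reflexive relation $(d_0,d_1)\colon S\rightarrowtail X\times X$ with reflexivity $s_0$ such that $(d_0,s_0)\in\Sigma$; a $\Sigma$-equivalence relation is an equivalence relation which is a $\Sigma$-relation. For reflexive relations $R$ and $S$ on $X$, let $R\times_XS$ be the pullback of $d_0^S$ along $d_1^R$ (elements $xRySz$), $\sigma_0^R=(1_R,s_0^Sd_1^R)\colon R\to R\times_XS$ ($xRy\mapsto xRySy$) and $\sigma_0^S=(s_0^Rd_0^S,1_S)\colon S\to R\times_XS$ ($ySz\mapsto yRySz$). We write $[R,S]=0$ ($R$ and $S$ centralize each other)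 when there is a morphism $p\colon R\times_XS\to X$ (a connector) with $p\sigma_0^R=d_0^R$ and $p\sigma_0^S=d_1^S$, i.e. $p(xRySy)=x$ and $p(yRySz)=z$. *)

theory Defs
  imports Main
begin

record ('o, 'a) cat =
  Ob  :: "'o set"
  Ar  :: "'a set"
  Dom :: "'a \<Rightarrow> 'o"
  Cod :: "'a \<Rightarrow> 'o"
  Comp :: "'a \<Rightarrow> 'a \<Rightarrow> 'a"   (* Comp C g f = g \<circ> f, defined when Cod f = Dom g *)
  Id  :: "'o \<Rightarrow> 'a"

definition hom :: "('o, 'a) cat \<Rightarrow> 'a \<Rightarrow> 'o \<Rightarrow> 'o \<Rightarrow> bool" where
  "hom C f X Y \<longleftrightarrow> f \<in> Ar C \<and> Dom C f = X \<and> Cod C f = Y"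

definition is_category :: "('o, 'a) cat \<Rightarrow> bool" where
  "is_category C \<longleftrightarrow>
     (\<forall>f \<in> Ar C. Dom C f \<in> Ob C \<and> Cod C f \<in> Ob C) \<and>
     (\<forall>X \<in> Ob C. hom C (Id C X) X X) \<and>
     (\<forall>f g. f \<in> Ar C \<and> g \<in> Ar C \<and> Cod C f = Dom C g \<longrightarrow>
        hom C (Comp C g f) (Dom C f) (Cod C g)) \<and>
     (\<forall>f g h. f \<in> Ar C \<and> g \<in> Ar C \<and> h \<in> Ar C \<and> Cod C f = Dom C g \<and> Cod C g = Dom C h \<longrightarrow>
        Comp C h (Comp C g f) = Comp C (Comp C h g) f) \<and>
     (\<forall>f \<in> Ar C. Comp C f (Id C (Dom C f)) = f \<and> Comp C (Id C (Cod C f)) f = f)"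

definition is_pullback :: "('o, 'a) cat \<Rightarrow> 'a \<Rightarrow> 'a \<Rightarrow> 'o \<Rightarrow> 'a \<Rightarrow> 'a \<Rightarrow> bool" where
  "is_pullback C f g P p q \<longleftrightarrow>
     f \<in> Ar C \<and> g \<in> Ar C \<and> Cod C f = Cod C g \<and>
     hom C p P (Dom C f) \<and> hom C q P (Dom C g) \<and> Comp C f p = Comp C g q \<and>
     (\<forall>T u v. hom C u T (Dom C f) \<and> hom C v T (Dom C g) \<and> Comp C f u = Comp C g v \<longrightarrow>
        (\<exists>!h. hom C h T P \<and> Comp C p h = u \<and> Comp C q h = v))"

definition is_terminal :: "('o, 'a) cat \<Rightarrow> 'o \<Rightarrow> bool" where
  "is_terminal C T \<longleftrightarrow> T \<in> Ob C \<and> (\<forall>X \<in> Ob C. \<exists>!h. hom C h X T)"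

definition finitely_complete :: "('o, 'a) cat \<Rightarrow> bool" where
  "finitely_complete C \<longleftrightarrow> is_category C \<and> (\<exists>T. is_terminal C T) \<and>
     (\<forall>f g. f \<in> Ar C \<and> g \<in> Ar C \<and> Cod C f = Cod C g \<longrightarrow> (\<exists>P p q. is_pullback C f g P p q))"

definition mono :: "('o, 'a) cat \<Rightarrow> 'a \<Rightarrow> bool" where
  "mono C m \<longleftrightarrow> m \<in> Ar C \<and>
     (\<forall>u v T. hom C u T (Dom C m) \<and> hom C v T (Dom C m) \<and> Comp C m u = Comp C m v \<longrightarrow> u = v)"

definition iso :: "('o, 'a) cat \<Rightarrow> 'a \<Rightarrow> bool" where
  "iso C f \<longleftrightarrow> f \<in> Ar C \<and> (\<exists>g. hom C g (Cod C f) (Dom C f) \<and>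
      Comp C g f = Id C (Dom C f) \<and> Comp C f g = Id C (Cod C f))"

definition split_epi :: "('o, 'a) cat \<Rightarrow> 'a \<Rightarrow> 'a \<Rightarrow> bool" where
  "split_epi C f s \<longleftrightarrow> f \<in> Ar C \<and> hom C s (Cod C f) (Dom C f) \<and> Comp C f s = Id C (Cod C f)"

definition fibrational :: "('o, 'a) cat \<Rightarrow> ('a \<Rightarrow> 'a \<Rightarrow> bool) \<Rightarrow> bool" where
  "fibrational C \<Sigma> \<longleftrightarrow>
     (\<forall>f s. \<Sigma> f s \<longrightarrow> split_epi C f s) \<and>
     (\<forall>f s. split_epi C f s \<and> iso C f \<longrightarrow> \<Sigma> f s) \<and>
     (\<forall>f s h P h' f' s'. \<Sigma> f s \<and> h \<in> Ar C \<and> Cod C h = Cod C f \<and>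
        is_pullback C f h P h' f' \<and>
        hom C s' (Dom C h) P \<and> Comp C f' s' = Id C (Dom C h) \<and> Comp C h' s' = Comp C s h
        \<longrightarrow> \<Sigma> f' s')"

definition jointly_extremally_epic :: "('o, 'a) cat \<Rightarrow> 'a \<Rightarrow> 'a \<Rightarrow> bool" where
  "jointly_extremally_epic C a b \<longleftrightarrow>
     a \<in> Ar C \<and> b \<in> Ar C \<and> Cod C a = Cod C b \<and>
     (\<forall>m M. mono C m \<and> hom C m M (Cod C a) \<and>
        (\<exists>u. hom C u (Dom C a) M \<and> Comp C m u = a) \<and>
        (\<exists>v. hom C v (Dom C b) M \<and> Comp C m v = b) \<longrightarrow> iso C m)"

text \<open>\<Sigma>-Mal'tsev: for (f,s): X \<rightleftarrows> Y in \<Sigma> and split epi (g,t) with g: Y' \<rightarrow> Y,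
  with X' = Y' \<times>_Y X (projections pi1: X' \<rightarrow> Y', pi2: X' \<rightarrow> X),
  s' = (1, s g) and tbar = (t f, 1), the pair (s', tbar) is jointly extremally epic.\<close>
definition Sigma_Maltsev :: "('o, 'a) cat \<Rightarrow> ('a \<Rightarrow> 'a \<Rightarrow> bool) \<Rightarrow> bool" where
  "Sigma_Maltsev C \<Sigma> \<longleftrightarrow>
     (\<forall>f s g t X' pi1 pi2 s' tb.
        \<Sigma> f s \<and> split_epi C g t \<and> Cod C g = Cod C f \<and>
        is_pullback C g f X' pi1 pi2 \<and>
        hom C s' (Dom C g) X' \<and> Comp C pi1 s' = Id C (Dom C g) \<and> Comp C pi2 s' = Comp C s g \<and>
        hom C tb (Dom C f) X' \<and> Comp C pi1 tb = Comp C t f \<and> Comp C pi2 tb = Id C (Dom C f)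
        \<longrightarrow> jointly_extremally_epic C s' tb)"

text \<open>A reflexive relation (d0, d1): S \<rightarrowtail> X \<times> X (a relation is a monomorphism into X \<times> X,
  i.e. a jointly monic pair) with reflexivity s0.\<close>
definition reflexive_relation :: "('o, 'a) cat \<Rightarrow> 'o \<Rightarrow> 'o \<Rightarrow> 'a \<Rightarrow> 'a \<Rightarrow> 'a \<Rightarrow> bool" where
  "reflexive_relation C X S d0 d1 s0 \<longleftrightarrow>
     hom C d0 S X \<and> hom C d1 S X \<and>
     (\<forall>u v T. hom C u T S \<and> hom C v T S \<and> Comp C d0 u = Comp C d0 v \<and> Comp C d1 u = Comp C d1 v
        \<longrightarrow> u = v) \<and>
     hom C s0 X S \<and> Comp C d0 s0 = Id C X \<and> Comp C d1 s0 = Id C X"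

definition equivalence_relation :: "('o, 'a) cat \<Rightarrow> 'o \<Rightarrow> 'o \<Rightarrow> 'a \<Rightarrow> 'a \<Rightarrow> 'a \<Rightarrow> bool" where
  "equivalence_relation C X S d0 d1 s0 \<longleftrightarrow>
     reflexive_relation C X S d0 d1 s0 \<and>
     (\<exists>\<sigma>. hom C \<sigma> S S \<and> Comp C d0 \<sigma> = d1 \<and> Comp C d1 \<sigma> = d0) \<and>
     (\<forall>T u v. hom C u T S \<and> hom C v T S \<and> Comp C d1 u = Comp C d0 v \<longrightarrow>
        (\<exists>w. hom C w T S \<and> Comp C d0 w = Comp C d0 u \<and> Comp C d1 w = Comp C d1 v))"

definition Sigma_equivalence_relation ::
    "('o, 'a) cat \<Rightarrow> ('a \<Rightarrow> 'a \<Rightarrow> bool) \<Rightarrow> 'o \<Rightarrow> 'o \<Rightarrow> 'a \<Rightarrow> 'a \<Rightarrow> 'a \<Rightarrow> bool" where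
  "Sigma_equivalence_relation C \<Sigma> X S d0 d1 s0 \<longleftrightarrow>
     equivalence_relation C X S d0 d1 s0 \<and> \<Sigma> d0 s0"

text \<open>R \<inter> S = \<Delta>_X: every generalised element of X \<times> X lying in both R and S is diagonal
  (R \<inter> S \<le> \<Delta>_X; the reverse inclusion holds by reflexivity).\<close>
definition meet_is_discrete ::
    "('o, 'a) cat \<Rightarrow> 'o \<Rightarrow> 'a \<Rightarrow> 'a \<Rightarrow> 'o \<Rightarrow> 'a \<Rightarrow> 'a \<Rightarrow> bool" where
  "meet_is_discrete C R d0R d1R S d0S d1S \<longleftrightarrow>
     (\<forall>T u v. hom C u T R \<and> hom C v T S \<and> Comp C d0R u = Comp C d0S v \<and> Comp C d1R u = Comp C d1S v
        \<longrightarrow> Comp C d0R u = Comp C d1R u)"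

text \<open>[R, S] = 0: for R \<times>_X S (pullback of d0S along d1R, projections pR, pS), there is a
  connector p: R \<times>_X S \<rightarrow> X with p sigmaR = d0R and p sigmaS = d1S, where
  sigmaR = (1_R, s0S d1R) and sigmaS = (s0R d0S, 1_S).\<close>
definition centralize ::
    "('o, 'a) cat \<Rightarrow> 'o \<Rightarrow> 'o \<Rightarrow> 'a \<Rightarrow> 'a \<Rightarrow> 'a \<Rightarrow> 'o \<Rightarrow> 'a \<Rightarrow> 'a \<Rightarrow> 'a \<Rightarrow> bool" where
  "centralize C X R d0R d1R s0R S d0S d1S s0S \<longleftrightarrow>
     (\<forall>P pR pS. is_pullback C d1R d0S P pR pS \<longrightarrow>
       (\<exists>p. hom C p P X \<and>
          (\<forall>sigR. hom C sigR R P \<and> Comp C pR sigR = Id C R \<and> Comp C pS sigR = Comp C s0S d1R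
             \<longrightarrow> Comp C p sigR = d0R) \<and>
          (\<forall>sigS. hom C sigS S P \<and> Comp C pR sigS = Comp C s0R d0S \<and> Comp C pS sigS = Id C S
             \<longrightarrow> Comp C p sigS = d1S)))"

end

theory Submission
  imports Defs
begin

locale cat0 =
  fixes C :: "('o, 'a) cat"
  assumes cat: "is_category C"
begin

abbreviation cp (infixr "\<cdot>" 55) where "g \<cdot> f \<equiv> Comp C g f"

lemma ar_comp[simp]: "f \<in> Ar C \<Longrightarrow> g \<in> Ar C \<Longrightarrow> Cod C f = Dom C g \<Longrightarrow> g \<cdot> f \<in> Ar C"
  using cat unfolding is_category_def hom_def by blast
lemma dom_comp[simp]: "f \<in> Ar C \<Longrightarrow> g \<in> Ar C \<Longrightarrow> Cod C f = Dom C g \<Longrightarrow> Dom C (g \<cdot> f) = Dom C f"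
  using cat unfolding is_category_def hom_def by blast
lemma cod_comp[simp]: "f \<in> Ar C \<Longrightarrow> g \<in> Ar C \<Longrightarrow> Cod C f = Dom C g \<Longrightarrow> Cod C (g \<cdot> f) = Cod C g"
  using cat unfolding is_category_def hom_def by blast
lemma assoc[simp]: "f \<in> Ar C \<Longrightarrow> g \<in> Ar C \<Longrightarrow> h \<in> Ar C \<Longrightarrow> Cod C f = Dom C g \<Longrightarrow> Cod C g = Dom C h
  \<Longrightarrow> (h \<cdot> g) \<cdot> f = h \<cdot> (g \<cdot> f)"
  using cat unfolding is_category_def by metis
lemma id_ar[simp]: "A \<in> Ob C \<Longrightarrow> Id C A \<in> Ar C"
  using cat unfolding is_category_def hom_def by blast
lemma dom_id[simp]: "A \<in> Ob C \<Longrightarrow> Dom C (Id C A) = A"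
  using cat unfolding is_category_def hom_def by blast
lemma cod_id[simp]: "A \<in> Ob C \<Longrightarrow> Cod C (Id C A) = A"
  using cat unfolding is_category_def hom_def by blast
lemma comp_id[simp]: "f \<in> Ar C \<Longrightarrow> Dom C f = A \<Longrightarrow> f \<cdot> Id C A = f"
  using cat unfolding is_category_def by blast
lemma id_comp[simp]: "f \<in> Ar C \<Longrightarrow> Cod C f = A \<Longrightarrow> Id C A \<cdot> f = f"
  using cat unfolding is_category_def by blast
lemma dom_ob: "f \<in> Ar C \<Longrightarrow> Dom C f \<in> Ob C"
  using cat unfolding is_category_def by blast
lemma cod_ob: "f \<in> Ar C \<Longrightarrow> Cod C f \<in> Ob C"
  using cat unfolding is_category_def by blast

lemma homD1: "hom C f A B \<Longrightarrow> f \<in> Ar C" unfolding hom_def by blast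
lemma homD2: "hom C f A B \<Longrightarrow> Dom C f = A" unfolding hom_def by blast
lemma homD3: "hom C f A B \<Longrightarrow> Cod C f = B" unfolding hom_def by blast

lemma homI: "f \<in> Ar C \<Longrightarrow> Dom C f = A \<Longrightarrow> Cod C f = B \<Longrightarrow> hom C f A B"
  unfolding hom_def by blast

lemma ext1: "g \<cdot> f = k \<Longrightarrow> f \<in> Ar C \<Longrightarrow> g \<in> Ar C \<Longrightarrow> Cod C f = Dom C g \<Longrightarrow> t \<in> Ar C \<Longrightarrow> Cod C t = Dom C f
   \<Longrightarrow> g \<cdot> (f \<cdot> t) = k \<cdot> t"
  by (metis assoc)

lemma ext1id: "g \<cdot> f = Id C B \<Longrightarrow> f \<in> Ar C \<Longrightarrow> g \<in> Ar C \<Longrightarrow> Cod C f = Dom C g \<Longrightarrow> t \<in> Ar C \<Longrightarrow> Cod C t = Dom C f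
   \<Longrightarrow> Cod C t = B \<Longrightarrow> g \<cdot> (f \<cdot> t) = t"
  by (metis ext1 id_comp)

lemma ext2: "g \<cdot> f = k \<cdot> h \<Longrightarrow> f \<in> Ar C \<Longrightarrow> g \<in> Ar C \<Longrightarrow> Cod C f = Dom C g \<Longrightarrow>
   h \<in> Ar C \<Longrightarrow> k \<in> Ar C \<Longrightarrow> Cod C h = Dom C k \<Longrightarrow> t \<in> Ar C \<Longrightarrow> Cod C t = Dom C f \<Longrightarrow> Dom C h = Dom C f
   \<Longrightarrow> g \<cdot> (f \<cdot> t) = k \<cdot> (h \<cdot> t)"
  by (metis assoc)

lemma pb_lift: "is_pullback C f g P p q \<Longrightarrow> hom C u A (Dom C f) \<Longrightarrow> hom C v A (Dom C g) \<Longrightarrow> f \<cdot> u = g \<cdot> v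
  \<Longrightarrow> \<exists>h. hom C h A P \<and> p \<cdot> h = u \<and> q \<cdot> h = v"
  unfolding is_pullback_def by blast

lemma pb_lift2: "is_pullback C f g P p q \<Longrightarrow> hom C u A B \<Longrightarrow> hom C v A D \<Longrightarrow> Dom C f = B \<Longrightarrow> Dom C g = D
  \<Longrightarrow> f \<cdot> u = g \<cdot> v \<Longrightarrow> \<exists>h. hom C h A P \<and> p \<cdot> h = u \<and> q \<cdot> h = v"
  unfolding is_pullback_def by blast

lemma pb_uniq: assumes pb: "is_pullback C f g P p q" and h1: "hom C h1 A P" and h2: "hom C h2 A P"
  and e1: "p \<cdot> h1 = p \<cdot> h2" and e2: "q \<cdot> h1 = q \<cdot> h2" shows "h1 = h2"
proof -
  have F: "f \<in> Ar C" "g \<in> Ar C" "Cod C f = Cod C g" "hom C p P (Dom C f)" "hom C q P (Dom C g)"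
    "f \<cdot> p = g \<cdot> q"
    and U: "\<forall>T u v. hom C u T (Dom C f) \<and> hom C v T (Dom C g) \<and> f \<cdot> u = g \<cdot> v \<longrightarrow>
        (\<exists>!h. hom C h T P \<and> p \<cdot> h = u \<and> q \<cdot> h = v)"
    using pb unfolding is_pullback_def by blast+
  have hu: "hom C (p \<cdot> h1) A (Dom C f)" "hom C (q \<cdot> h1) A (Dom C g)"
    using F h1 by (auto simp: hom_def)
  have "f \<cdot> (p \<cdot> h1) = g \<cdot> (q \<cdot> h1)"
    using ext2[OF F(6)] F h1 by (auto simp: hom_def)
  then have "\<exists>!h. hom C h A P \<and> p \<cdot> h = p \<cdot> h1 \<and> q \<cdot> h = q \<cdot> h1" using U hu by blast
  then show ?thesis using h1 h2 e1 e2 by metis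
qed

end

lemma (in cat0) main:
  assumes fc: "finitely_complete C"
    and mal: "Sigma_Maltsev C \<Sigma>"
    and XO: "X \<in> Ob C"
    and ER: "equivalence_relation C X R d0R d1R s0R"
    and ES: "Sigma_equivalence_relation C \<Sigma> X S d0S d1S s0S"
    and disc: "meet_is_discrete C R d0R d1R S d0S d1S"
  shows "centralize C X R d0R d1R s0R S d0S d1S s0S"
  unfolding centralize_def
proof (intro allI impI)
  fix P pR pS assume pb: "is_pullback C d1R d0S P pR pS"
  have Rf: "hom C d0R R X" "hom C d1R R X" "hom C s0R X R" "d0R \<cdot> s0R = Id C X" "d1R \<cdot> s0R = Id C X"
    and jmR: "\<And>u v T. hom C u T R \<Longrightarrow> hom C v T R \<Longrightarrow> d0R \<cdot> u = d0R \<cdot> v \<Longrightarrow> d1R \<cdot> u = d1R \<cdot> v \<Longrightarrow> u = v"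
    and trR: "\<And>T u v. hom C u T R \<Longrightarrow> hom C v T R \<Longrightarrow> d1R \<cdot> u = d0R \<cdot> v \<Longrightarrow>
        (\<exists>w. hom C w T R \<and> d0R \<cdot> w = d0R \<cdot> u \<and> d1R \<cdot> w = d1R \<cdot> v)"
    using ER unfolding equivalence_relation_def reflexive_relation_def by blast+
  obtain sgR where sgR: "hom C sgR R R" "d0R \<cdot> sgR = d1R" "d1R \<cdot> sgR = d0R"
    using ER unfolding equivalence_relation_def by blast
  have Sf: "hom C d0S S X" "hom C d1S S X" "hom C s0S X S" "d0S \<cdot> s0S = Id C X" "d1S \<cdot> s0S = Id C X"
    and jmS: "\<And>u v T. hom C u T S \<Longrightarrow> hom C v T S \<Longrightarrow> d0S \<cdot> u = d0S \<cdot> v \<Longrightarrow> d1S \<cdot> u = d1S \<cdot> v \<Longrightarrow> u = v"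
    and trS: "\<And>T u v. hom C u T S \<Longrightarrow> hom C v T S \<Longrightarrow> d1S \<cdot> u = d0S \<cdot> v \<Longrightarrow>
        (\<exists>w. hom C w T S \<and> d0S \<cdot> w = d0S \<cdot> u \<and> d1S \<cdot> w = d1S \<cdot> v)"
    and Sig: "\<Sigma> d0S s0S"
    using ES unfolding Sigma_equivalence_relation_def equivalence_relation_def reflexive_relation_def by blast+
  obtain sgS where sgS: "hom C sgS S S" "d0S \<cdot> sgS = d1S" "d1S \<cdot> sgS = d0S"
    using ES unfolding Sigma_equivalence_relation_def equivalence_relation_def by blast
  have Pf: "hom C pR P R" "hom C pS P S" "d1R \<cdot> pR = d0S \<cdot> pS"
    using pb Rf Sf unfolding is_pullback_def hom_def by auto
  have RO: "R \<in> Ob C" "S \<in> Ob C" "P \<in> Ob C" using Rf Sf Pf dom_ob unfolding hom_def by blast+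
  note H = Rf(1-3) Sf(1-3) Pf(1,2) sgR(1) sgS(1)
  note ty = H[THEN homD1] H[THEN homD2] H[THEN homD3] RO XO

  obtain T where trm: "is_terminal C T" using fc unfolding finitely_complete_def by blast
  obtain tX where tX: "hom C tX X T" using trm XO unfolding is_terminal_def by blast
  obtain XX \<pi>1 \<pi>2 where pbX: "is_pullback C tX tX XX \<pi>1 \<pi>2"
    using fc tX unfolding finitely_complete_def hom_def by blast
  have Xf: "hom C \<pi>1 XX X" "hom C \<pi>2 XX X" using pbX tX unfolding is_pullback_def hom_def by auto
  have pair: "\<And>A u v. hom C u A X \<Longrightarrow> hom C v A X \<Longrightarrow> \<exists>h. hom C h A XX \<and> \<pi>1 \<cdot> h = u \<and> \<pi>2 \<cdot> h = v"
  proof -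
    fix A u v assume u: "hom C u A X" and v: "hom C v A X"
    have AO: "A \<in> Ob C" using u dom_ob unfolding hom_def by blast
    have "hom C (tX \<cdot> u) A T" "hom C (tX \<cdot> v) A T" using u v tX by (auto simp: hom_def)
    then have "tX \<cdot> u = tX \<cdot> v" using trm AO unfolding is_terminal_def by blast
    then show "\<exists>h. hom C h A XX \<and> \<pi>1 \<cdot> h = u \<and> \<pi>2 \<cdot> h = v"
      using pb_lift[OF pbX, of u A v] u v tX by (simp add: hom_def)
  qed
  have puniq: "\<And>A h1 h2. hom C h1 A XX \<Longrightarrow> hom C h2 A XX \<Longrightarrow> \<pi>1 \<cdot> h1 = \<pi>1 \<cdot> h2 \<Longrightarrow> \<pi>2 \<cdot> h1 = \<pi>2 \<cdot> h2 \<Longrightarrow> h1 = h2"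
    using pb_uniq[OF pbX] by blast
  obtain N q1 q2 where pbN: "is_pullback C d1S d0R N q1 q2"
    using fc ty unfolding finitely_complete_def by metis
  have Nf: "hom C q1 N S" "hom C q2 N R" "d1S \<cdot> q1 = d0R \<cdot> q2"
    using pbN ty unfolding is_pullback_def hom_def by auto
  have NO: "N \<in> Ob C" using Nf dom_ob unfolding hom_def by blast
  note H2 = Xf Nf(1,2)
  note ty2 = H2[THEN homD1] H2[THEN homD2] H2[THEN homD3] NO
  obtain n where nf: "hom C n N XX" "\<pi>1 \<cdot> n = d0S \<cdot> q1" "\<pi>2 \<cdot> n = d1R \<cdot> q2"
    using pair[of "d0S \<cdot> q1" N "d1R \<cdot> q2"] ty ty2 by (auto simp: hom_def)
  obtain e where ef: "hom C e P XX" "\<pi>1 \<cdot> e = d0R \<cdot> pR" "\<pi>2 \<cdot> e = d1S \<cdot> pS"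
    using pair[of "d0R \<cdot> pR" P "d1S \<cdot> pS"] ty ty2 by (auto simp: hom_def)
  obtain M mN mP where pbM: "is_pullback C n e M mN mP"
    using fc nf ef unfolding finitely_complete_def hom_def by metis
  have Mf: "hom C mN M N" "hom C mP M P" "n \<cdot> mN = e \<cdot> mP"
    using pbM nf ef unfolding is_pullback_def hom_def by auto
  have MO: "M \<in> Ob C" using Mf dom_ob unfolding hom_def by blast
  note H3 = nf(1) ef(1) Mf(1,2)
  note ty3 = H3[THEN homD1] H3[THEN homD2] H3[THEN homD3] MO
  note TY = ty ty2 ty3
  have mono: "mono C mP"
    unfolding mono_def
  proof (intro conjI allI impI)
    show "mP \<in> Ar C" using TY by simp
    fix a b T' assume ab: "hom C a T' (Dom C mP) \<and> hom C b T' (Dom C mP) \<and> mP \<cdot> a = mP \<cdot> b"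
    then have a: "hom C a T' M" and b: "hom C b T' M" and eab: "mP \<cdot> a = mP \<cdot> b" using TY by auto
    note ta = a[THEN homD1] a[THEN homD2] a[THEN homD3] b[THEN homD1] b[THEN homD2] b[THEN homD3]
    define \<alpha> where "\<alpha> = mN \<cdot> a"
    define \<beta> where "\<beta> = mN \<cdot> b"
    have ha: "hom C \<alpha> T' N" "hom C \<beta> T' N" unfolding \<alpha>_def \<beta>_def using TY ta by (auto intro!: homI)
    note tb = ha[THEN homD1] ha[THEN homD2] ha[THEN homD3]
    have "n \<cdot> \<alpha> = e \<cdot> (mP \<cdot> a)" unfolding \<alpha>_def by (rule ext2[OF Mf(3)]) (use TY ta in simp_all)
    moreover have "n \<cdot> \<beta> = e \<cdot> (mP \<cdot> b)" unfolding \<beta>_def by (rule ext2[OF Mf(3)]) (use TY ta in simp_all)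
    ultimately have nab: "n \<cdot> \<alpha> = n \<cdot> \<beta>" using eab by simp
    have "\<pi>1 \<cdot> (n \<cdot> \<alpha>) = d0S \<cdot> (q1 \<cdot> \<alpha>)" "\<pi>1 \<cdot> (n \<cdot> \<beta>) = d0S \<cdot> (q1 \<cdot> \<beta>)"
      "\<pi>2 \<cdot> (n \<cdot> \<alpha>) = d1R \<cdot> (q2 \<cdot> \<alpha>)" "\<pi>2 \<cdot> (n \<cdot> \<beta>) = d1R \<cdot> (q2 \<cdot> \<beta>)"
      by (rule ext2[OF nf(2)] ext2[OF nf(3)]; use TY tb in simp)+
    then have e1: "d0S \<cdot> (q1 \<cdot> \<alpha>) = d0S \<cdot> (q1 \<cdot> \<beta>)" and e2: "d1R \<cdot> (q2 \<cdot> \<alpha>) = d1R \<cdot> (q2 \<cdot> \<beta>)"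
      using nab by metis+
    have w1: "d1S \<cdot> (q1 \<cdot> \<alpha>) = d0R \<cdot> (q2 \<cdot> \<alpha>)" "d1S \<cdot> (q1 \<cdot> \<beta>) = d0R \<cdot> (q2 \<cdot> \<beta>)"
      by (rule ext2[OF Nf(3)]; use TY tb in simp)+
    define sa where "sa = q1 \<cdot> \<alpha>"
    define sb where "sb = q1 \<cdot> \<beta>"
    define ra where "ra = q2 \<cdot> \<alpha>"
    define rb where "rb = q2 \<cdot> \<beta>"
    have hs: "hom C sa T' S" "hom C sb T' S" "hom C ra T' R" "hom C rb T' R"
      unfolding sa_def sb_def ra_def rb_def using TY tb by (auto intro!: homI)
    note ts = hs[THEN homD1] hs[THEN homD2] hs[THEN homD3]
    have s1: "d0S \<cdot> (sgS \<cdot> sa) = d1S \<cdot> sa" "d1S \<cdot> (sgS \<cdot> sa) = d0S \<cdot> sa"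
      by (rule ext1[OF sgS(2)] ext1[OF sgS(3)]; use TY ts in simp)+
    have r1: "d0R \<cdot> (sgR \<cdot> rb) = d1R \<cdot> rb" "d1R \<cdot> (sgR \<cdot> rb) = d0R \<cdot> rb"
      by (rule ext1[OF sgR(2)] ext1[OF sgR(3)]; use TY ts in simp)+
    have hsg: "hom C (sgS \<cdot> sa) T' S" "hom C (sgR \<cdot> rb) T' R" using TY ts by (auto intro!: homI)
    obtain ws where ws: "hom C ws T' S" "d0S \<cdot> ws = d0S \<cdot> (sgS \<cdot> sa)" "d1S \<cdot> ws = d1S \<cdot> sb"
      using trS[OF hsg(1) hs(2)] s1 e1 unfolding sa_def sb_def by metis
    obtain wr where wr: "hom C wr T' R" "d0R \<cdot> wr = d0R \<cdot> ra" "d1R \<cdot> wr = d1R \<cdot> (sgR \<cdot> rb)"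
      using trR[OF hs(3) hsg(2)] r1 e2 unfolding ra_def rb_def by metis
    have "d0R \<cdot> wr = d0S \<cdot> ws" "d1R \<cdot> wr = d1S \<cdot> ws"
      using ws wr s1 r1 w1 unfolding sa_def sb_def ra_def rb_def by metis+
    then have "d0R \<cdot> wr = d1R \<cdot> wr" using disc wr(1) ws(1) unfolding meet_is_discrete_def by blast
    then have ww: "d0R \<cdot> ra = d0R \<cdot> rb" using wr r1 by metis
    have "sa = sb" using jmS[OF hs(1,2)] e1 w1 ww unfolding sa_def sb_def ra_def rb_def by metis
    moreover have "ra = rb" using jmR[OF hs(3,4)] e2 ww unfolding ra_def rb_def by metis
    ultimately have "\<alpha> = \<beta>" using pb_uniq[OF pbN ha] unfolding sa_def sb_def ra_def rb_def by blast
    then show "a = b" using pb_uniq[OF pbM a b] eab unfolding \<alpha>_def \<beta>_def by blast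
  qed
  have h01: "hom C (s0S \<cdot> d1R) R S" "hom C (s0R \<cdot> d0S) S R" "hom C (s0S \<cdot> d0R) R S" "hom C (s0R \<cdot> d1S) S R"
    using TY by (auto intro!: homI)
  have IdR: "hom C (Id C R) R R" "hom C (Id C S) S S" using TY by (auto intro!: homI)
  have x1: "d0S \<cdot> (s0S \<cdot> d1R) = d1R" "d1R \<cdot> (s0R \<cdot> d0S) = d0S" "d1S \<cdot> (s0S \<cdot> d0R) = d0R"
    "d0R \<cdot> (s0R \<cdot> d1S) = d1S" "d0R \<cdot> (s0R \<cdot> d0S) = d0S" "d1R \<cdot> (s0R \<cdot> d1S) = d1S"
    "d0S \<cdot> (s0S \<cdot> d0R) = d0R" "d1S \<cdot> (s0S \<cdot> d1R) = d1R"
    by (rule ext1id[OF Sf(4)] ext1id[OF Rf(5)] ext1id[OF Sf(5)] ext1id[OF Rf(4)]; use TY in simp)+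
  obtain sR where sR: "hom C sR R P" "pR \<cdot> sR = Id C R" "pS \<cdot> sR = s0S \<cdot> d1R"
    using pb_lift2[OF pb IdR(1) h01(1)] x1 TY by auto
  obtain tS where tS: "hom C tS S P" "pR \<cdot> tS = s0R \<cdot> d0S" "pS \<cdot> tS = Id C S"
    using pb_lift2[OF pb h01(2) IdR(2)] x1 TY by auto
  have jee: "jointly_extremally_epic C sR tS"
  proof -
    have "split_epi C d1R s0R" unfolding split_epi_def using Rf TY by simp
    moreover have "hom C sR (Dom C d1R) P" "pR \<cdot> sR = Id C (Dom C d1R)" "pS \<cdot> sR = s0S \<cdot> d1R"
      "hom C tS (Dom C d0S) P" "pR \<cdot> tS = s0R \<cdot> d0S" "pS \<cdot> tS = Id C (Dom C d0S)"
      using sR tS TY by auto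
    moreover have "Cod C d1R = Cod C d0S" using TY by simp
    ultimately show ?thesis using mal Sig pb unfolding Sigma_Maltsev_def by blast
  qed
  obtain uN where uN: "hom C uN R N" "q1 \<cdot> uN = s0S \<cdot> d0R" "q2 \<cdot> uN = Id C R"
    using pb_lift2[OF pbN h01(3) IdR(1)] x1 TY by auto
  obtain vN where vN: "hom C vN S N" "q1 \<cdot> vN = Id C S" "q2 \<cdot> vN = s0R \<cdot> d1S"
    using pb_lift2[OF pbN IdR(2) h01(4)] x1 TY by auto

  have nuN: "n \<cdot> uN = e \<cdot> sR"
  proof (rule puniq)
    show "hom C (n \<cdot> uN) R XX" "hom C (e \<cdot> sR) R XX" using nf ef uN sR by (auto simp: hom_def)
    have "\<pi>1 \<cdot> (n \<cdot> uN) = d0S \<cdot> (q1 \<cdot> uN)" "\<pi>1 \<cdot> (e \<cdot> sR) = d0R \<cdot> (pR \<cdot> sR)"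
      "\<pi>2 \<cdot> (n \<cdot> uN) = d1R \<cdot> (q2 \<cdot> uN)" "\<pi>2 \<cdot> (e \<cdot> sR) = d1S \<cdot> (pS \<cdot> sR)"
      by (rule ext2[OF nf(2)] ext2[OF ef(2)] ext2[OF nf(3)] ext2[OF ef(3)]; use TY uN sR in \<open>simp add: hom_def\<close>)+
    then show "\<pi>1 \<cdot> (n \<cdot> uN) = \<pi>1 \<cdot> (e \<cdot> sR)" "\<pi>2 \<cdot> (n \<cdot> uN) = \<pi>2 \<cdot> (e \<cdot> sR)"
      using uN sR x1 TY by simp_all
  qed
  have nvN: "n \<cdot> vN = e \<cdot> tS"
  proof (rule puniq)
    show "hom C (n \<cdot> vN) S XX" "hom C (e \<cdot> tS) S XX" using nf ef vN tS by (auto simp: hom_def)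
    have "\<pi>1 \<cdot> (n \<cdot> vN) = d0S \<cdot> (q1 \<cdot> vN)" "\<pi>1 \<cdot> (e \<cdot> tS) = d0R \<cdot> (pR \<cdot> tS)"
      "\<pi>2 \<cdot> (n \<cdot> vN) = d1R \<cdot> (q2 \<cdot> vN)" "\<pi>2 \<cdot> (e \<cdot> tS) = d1S \<cdot> (pS \<cdot> tS)"
      by (rule ext2[OF nf(2)] ext2[OF ef(2)] ext2[OF nf(3)] ext2[OF ef(3)]; use TY vN tS in \<open>simp add: hom_def\<close>)+
    then show "\<pi>1 \<cdot> (n \<cdot> vN) = \<pi>1 \<cdot> (e \<cdot> tS)" "\<pi>2 \<cdot> (n \<cdot> vN) = \<pi>2 \<cdot> (e \<cdot> tS)"
      using vN tS x1 TY by simp_all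
  qed
  obtain uM where uM: "hom C uM R M" "mN \<cdot> uM = uN" "mP \<cdot> uM = sR"
    using pb_lift2[OF pbM uN(1) sR(1)] nuN TY by auto
  obtain vM where vM: "hom C vM S M" "mN \<cdot> vM = vN" "mP \<cdot> vM = tS"
    using pb_lift2[OF pbM vN(1) tS(1)] nvN TY by auto
  have "iso C mP"
  proof -
    have "Cod C sR = P" "Dom C sR = R" "Dom C tS = S" using sR tS by (auto simp: hom_def)
    then show ?thesis using jee mono Mf(2) uM vM unfolding jointly_extremally_epic_def by metis
  qed
  then obtain g where g: "hom C g P M" "g \<cdot> mP = Id C M" "mP \<cdot> g = Id C P"
    using TY unfolding iso_def by auto
  note tg = g(1)[THEN homD1] g(1)[THEN homD2] g(1)[THEN homD3]
    uM(1)[THEN homD1] uM(1)[THEN homD2] uM(1)[THEN homD3]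
    vM(1)[THEN homD1] vM(1)[THEN homD2] vM(1)[THEN homD3]
    sR(1)[THEN homD1] sR(1)[THEN homD2] sR(1)[THEN homD3]
    tS(1)[THEN homD1] tS(1)[THEN homD2] tS(1)[THEN homD3]
    uN(1)[THEN homD1] uN(1)[THEN homD2] uN(1)[THEN homD3]
    vN(1)[THEN homD1] vN(1)[THEN homD2] vN(1)[THEN homD3]
  have gs: "g \<cdot> sR = uM" "g \<cdot> tS = vM"
    using ext1id[OF g(2), of uM] ext1id[OF g(2), of vM] uM vM TY tg by simp_all
  have sRu: "\<And>sigR. hom C sigR R P \<and> pR \<cdot> sigR = Id C R \<and> pS \<cdot> sigR = s0S \<cdot> d1R \<Longrightarrow> sigR = sR"
    using pb_uniq[OF pb] sR by metis
  have tSu: "\<And>sigS. hom C sigS S P \<and> pR \<cdot> sigS = s0R \<cdot> d0S \<and> pS \<cdot> sigS = Id C S \<Longrightarrow> sigS = tS"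
    using pb_uniq[OF pb] tS by metis
  define p where "p = d1S \<cdot> (q1 \<cdot> (mN \<cdot> g))"
  have hp: "hom C p P X" unfolding p_def using TY tg by (auto intro!: homI)
  have p1: "p \<cdot> sR = d0R" unfolding p_def using TY tg gs uM uN x1 by simp
  have p2: "p \<cdot> tS = d1S" unfolding p_def using TY tg gs vM vN x1 by simp
  show "\<exists>p. hom C p P X \<and>
          (\<forall>sigR. hom C sigR R P \<and> pR \<cdot> sigR = Id C R \<and> pS \<cdot> sigR = s0S \<cdot> d1R
             \<longrightarrow> p \<cdot> sigR = d0R) \<and>
          (\<forall>sigS. hom C sigS S P \<and> pR \<cdot> sigS = s0R \<cdot> d0S \<and> pS \<cdot> sigS = Id C S
             \<longrightarrow> p \<cdot> sigS = d1S)"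
    using hp p1 p2 sRu tSu by blast
qed


theorem proposition3p6:
  fixes C :: "('o, 'a) cat" and \<Sigma> :: "'a \<Rightarrow> 'a \<Rightarrow> bool"
  assumes "finitely_complete C"
    and "fibrational C \<Sigma>"
    and "Sigma_Maltsev C \<Sigma>"
    and "X \<in> Ob C"
    and "equivalence_relation C X R d0R d1R s0R"
    and "Sigma_equivalence_relation C \<Sigma> X S d0S d1S s0S"
    and "meet_is_discrete C R d0R d1R S d0S d1S"
  shows "centralize C X R d0R d1R s0R S d0S d1S s0S"
proof -
  interpret cat0 C using assms(1) unfolding finitely_complete_def by unfold_locales blast
  show ?thesis using main assms by blast
qed
end
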